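(* There do not exist a mapping $\hat c$ from the set of $3$-element multisets of elements of $[3]=\{1,2,3\}$ to $[3]$ and a function $m'$ from positive integers to positive integers such that the following holds for every positive integer $m$: for every hypergraph $G=(V,E)$ and every $3$-coloring $c:\binom{V}{2}\to[3]$ of the pairs of vertices of $G$ such that every hyperedge containing at least $m$ vertices contains pairs of all three colors, the coloring $c':\binom{V}{3}\to[3]$ defined by $c'(\{x,y,z\})=\hat c(\{c(\{x,y\}),c(\{x,z\}),c(\{y,z\})\})$ (multiset) has the property that every hyperedge containing at least $m'(m)$ vertices contains triples of all three colors.
   Context: $\binom{V}{j}$ denotes the set of $j$-element subsets of $V$. A hyperedge contains a pair/triple if it is a subset of the hyperedge. *)

theory Defs
  imports Main "HOL-Library.Multiset"
begin

definition colours3 :: "nat set" where "colours3 = {1, 2, 3}"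

definition tri_col :: "(nat multiset \<Rightarrow> nat) \<Rightarrow> (nat set \<Rightarrow> nat) \<Rightarrow> nat set \<Rightarrow> nat" where
  "tri_col chat c T = chat (image_mset c (mset_set {p. p \<subseteq> T \<and> card p = 2}))"

definition all_colours :: "(nat set \<Rightarrow> nat) \<Rightarrow> nat \<Rightarrow> nat set \<Rightarrow> bool" where
  "all_colours f k e = (\<forall>col\<in>colours3. \<exists>S. S \<subseteq> e \<and> card S = k \<and> f S = col)"

end

theory Submission
  imports Defs
begin

lemma three_sorted:
  fixes S :: "nat set"
  assumes "card S = 3"
  shows "\<exists>x y z. x < y \<and> y < z \<and> S = {x,y,z}"
proof -
  obtain a b c where S: "S = {a,b,c}" "a \<noteq> b" "a \<noteq> c" "b \<noteq> c"
    using assms card_3_iff by metis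
  have h: "\<And>x y z. x < y \<Longrightarrow> y < z \<Longrightarrow> S = {x,y,z} \<Longrightarrow> ?thesis" by blast
  have "a < b \<or> b < a" "a < c \<or> c < a" "b < c \<or> c < b" using S by auto
  then show ?thesis
  proof (elim disjE)
  qed (use S(1) h in \<open>metis insert_commute less_trans less_irrefl\<close>)+
qed

lemma pairs3:
  assumes "x \<noteq> y" "x \<noteq> z" "y \<noteq> z"
  shows "{p. p \<subseteq> {x,y,z} \<and> card p = 2} = {{x,y},{x,z},{y,z}}"
proof (rule set_eqI, rule iffI)
  fix p assume "p \<in> {p. p \<subseteq> {x,y,z} \<and> card p = 2}"
  then obtain a b where "p = {a,b}" "a \<noteq> b" "a \<in> {x,y,z}" "b \<in> {x,y,z}"
    by (auto simp: card_2_iff)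
  then show "p \<in> {{x,y},{x,z},{y,z}}" by auto
next
  fix p assume "p \<in> {{x,y},{x,z},{y,z}}"
  then show "p \<in> {p. p \<subseteq> {x,y,z} \<and> card p = 2}" using assms by auto
qed

lemma tri3:
  assumes "x \<noteq> y" "x \<noteq> z" "y \<noteq> z"
  shows "tri_col chat c {x,y,z} = chat {#c {x,y}, c {x,z}, c {y,z}#}"
proof -
  have d: "{x,y} \<noteq> {x,z}" "{x,y} \<noteq> {y,z}" "{x,z} \<noteq> {y,z}"
    using assms by (auto simp: doubleton_eq_iff)
  show ?thesis unfolding tri_col_def pairs3[OF assms] using d
    by (simp add: add_mset_commute)
qed


lemma construction:
  assumes H: "\<forall>(V :: nat set) (E :: nat set set) (c :: nat set \<Rightarrow> nat).
          finite V \<and> E \<subseteq> Pow V \<and>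
          (\<forall>p. p \<subseteq> V \<and> card p = 2 \<longrightarrow> c p \<in> colours3) \<and>
          (\<forall>e\<in>E. 1 \<le> card e \<longrightarrow> all_colours c 2 e)
          \<longrightarrow> (\<forall>e\<in>E. K \<le> card e \<longrightarrow> all_colours (tri_col chat c) 3 e)"
    and cols: "A \<in> colours3" "B \<in> colours3" "C \<in> colours3" "D \<in> colours3"
    and cover: "colours3 \<subseteq> {A,B,C,D}"
    and col: "col \<in> colours3"
  shows "col \<in> {chat {#A,A,A#}, chat {#C,C,A#}, chat {#D,D,A#}, chat {#B,C,D#}}"
proof -
  define V :: "nat set" where "V = {0..<K+4}"
  define c :: "nat set \<Rightarrow> nat" where
    "c p = (if p = {0,1} then B else if 0 \<in> p then C else if 1 \<in> p then D else A)" for p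
  have cV: "\<forall>p. p \<subseteq> V \<and> card p = 2 \<longrightarrow> c p \<in> colours3"
    using cols unfolding c_def by auto
  have allV: "all_colours c 2 V"
    unfolding all_colours_def
  proof
    fix k assume "k \<in> colours3"
    then have "k = A \<or> k = B \<or> k = C \<or> k = D" using cover by auto
    then show "\<exists>S. S \<subseteq> V \<and> card S = 2 \<and> c S = k"
    proof (elim disjE)
      assume "k = A" then show ?thesis
        by (intro exI[of _ "{2,3}"]) (auto simp: V_def c_def doubleton_eq_iff)
    next
      assume "k = B" then show ?thesis
        by (intro exI[of _ "{0,1}"]) (auto simp: V_def c_def)
    next
      assume "k = C" then show ?thesis
        by (intro exI[of _ "{0,2}"]) (auto simp: V_def c_def doubleton_eq_iff)
    next
      assume "k = D" then show ?thesis
        by (intro exI[of _ "{1,2}"]) (auto simp: V_def c_def doubleton_eq_iff)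
    qed
  qed
  have "all_colours (tri_col chat c) 3 V"
    using H[rule_format, of V "{V}" c] cV allV by (auto simp: V_def)
  then obtain S where S: "S \<subseteq> V" "card S = 3" "tri_col chat c S = col"
    using col unfolding all_colours_def by blast
  obtain x y z where xyz: "x < y" "y < z" "S = {x,y,z}"
    using three_sorted[OF S(2)] by blast
  have t: "col = chat {#c {x,y}, c {x,z}, c {y,z}#}"
    using S(3) tri3[of x y z chat c] xyz by auto
  consider "x = 0" "y = 1" | "x = 0" "y \<ge> 2" | "x = 1" | "x \<ge> 2" using xyz by linarith
  then show ?thesis
  proof cases
    case 1
    then have "c {x,y} = B" "c {x,z} = C" "c {y,z} = D" using xyz
      by (auto simp: c_def doubleton_eq_iff)
    then show ?thesis using t by simp
  next
    case 2
    then have "c {x,y} = C" "c {x,z} = C" "c {y,z} = A" using xyz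
      by (auto simp: c_def doubleton_eq_iff)
    then show ?thesis using t by simp
  next
    case 3
    then have "c {x,y} = D" "c {x,z} = D" "c {y,z} = A" using xyz
      by (auto simp: c_def doubleton_eq_iff)
    then show ?thesis using t by simp
  next
    case 4
    then have "c {x,y} = A" "c {x,z} = A" "c {y,z} = A" using xyz
      by (auto simp: c_def doubleton_eq_iff)
    then show ?thesis using t by simp
  qed
qed

lemma fin:
  fixes a b p r s :: nat
  assumes "1 \<in> {a,b,p}" "2 \<in> {a,b,p}" "3 \<in> {a,b,p}"
    "1 \<in> {a,b,r}" "2 \<in> {a,b,r}" "3 \<in> {a,b,r}"
    "1 \<in> {s,r,p}" "2 \<in> {s,r,p}" "3 \<in> {s,r,p}"
  shows False
proof -
  have "1 = a \<or> 1 = b \<or> 1 = p" "2 = a \<or> 2 = b \<or> 2 = p" "3 = a \<or> 3 = b \<or> 3 = p"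
    "1 = a \<or> 1 = b \<or> 1 = r" "2 = a \<or> 2 = b \<or> 2 = r" "3 = a \<or> 3 = b \<or> 3 = r"
    "1 = s \<or> 1 = r \<or> 1 = p" "2 = s \<or> 2 = r \<or> 2 = p" "3 = s \<or> 3 = r \<or> 3 = p"
    using assms by simp_all
  then show False by linarith
qed

theorem proposition5:
  shows "\<not> (\<exists>(chat :: nat multiset \<Rightarrow> nat) (m' :: nat \<Rightarrow> nat).
      (\<forall>M. set_mset M \<subseteq> colours3 \<and> size M = 3 \<longrightarrow> chat M \<in> colours3) \<and>
      (\<forall>m \<ge> 1. m' m \<ge> 1) \<and>
      (\<forall>m \<ge> 1. \<forall>(V :: nat set) (E :: nat set set) (c :: nat set \<Rightarrow> nat).
          finite V \<and> E \<subseteq> Pow V \<and>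
          (\<forall>p. p \<subseteq> V \<and> card p = 2 \<longrightarrow> c p \<in> colours3) \<and>
          (\<forall>e\<in>E. m \<le> card e \<longrightarrow> all_colours c 2 e)
          \<longrightarrow> (\<forall>e\<in>E. m' m \<le> card e \<longrightarrow> all_colours (tri_col chat c) 3 e)))"
proof
  assume "\<exists>(chat :: nat multiset \<Rightarrow> nat) (m' :: nat \<Rightarrow> nat).
      (\<forall>M. set_mset M \<subseteq> colours3 \<and> size M = 3 \<longrightarrow> chat M \<in> colours3) \<and>
      (\<forall>m \<ge> 1. m' m \<ge> 1) \<and>
      (\<forall>m \<ge> 1. \<forall>(V :: nat set) (E :: nat set set) (c :: nat set \<Rightarrow> nat).
          finite V \<and> E \<subseteq> Pow V \<and>
          (\<forall>p. p \<subseteq> V \<and> card p = 2 \<longrightarrow> c p \<in> colours3) \<and>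
          (\<forall>e\<in>E. m \<le> card e \<longrightarrow> all_colours c 2 e)
          \<longrightarrow> (\<forall>e\<in>E. m' m \<le> card e \<longrightarrow> all_colours (tri_col chat c) 3 e))"
  then show False
  proof (elim exE conjE)
  fix chat :: "nat multiset \<Rightarrow> nat" and m' :: "nat \<Rightarrow> nat"
  assume H0: "\<forall>m \<ge> 1. \<forall>(V :: nat set) (E :: nat set set) (c :: nat set \<Rightarrow> nat).
          finite V \<and> E \<subseteq> Pow V \<and>
          (\<forall>p. p \<subseteq> V \<and> card p = 2 \<longrightarrow> c p \<in> colours3) \<and>
          (\<forall>e\<in>E. m \<le> card e \<longrightarrow> all_colours c 2 e)
          \<longrightarrow> (\<forall>e\<in>E. m' m \<le> card e \<longrightarrow> all_colours (tri_col chat c) 3 e)"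
  have H: "\<forall>(V :: nat set) (E :: nat set set) (c :: nat set \<Rightarrow> nat).
          finite V \<and> E \<subseteq> Pow V \<and>
          (\<forall>p. p \<subseteq> V \<and> card p = 2 \<longrightarrow> c p \<in> colours3) \<and>
          (\<forall>e\<in>E. 1 \<le> card e \<longrightarrow> all_colours c 2 e)
          \<longrightarrow> (\<forall>e\<in>E. m' 1 \<le> card e \<longrightarrow> all_colours (tri_col chat c) 3 e)"
    using mp[OF spec[OF H0, of 1]] by simp
  have c3: "(1::nat) \<in> colours3" "(2::nat) \<in> colours3" "(3::nat) \<in> colours3"
    by (auto simp: colours3_def)
  have cov1: "colours3 \<subseteq> {1::nat,2,3,1}" by (auto simp: colours3_def)
  have cov2: "colours3 \<subseteq> {2::nat,1,3,2}" by (auto simp: colours3_def)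
  have cov3: "colours3 \<subseteq> {1::nat,2,3,3}" by (auto simp: colours3_def)
  have e1: "{#2,3,1#} = {#1::nat,3,2#}" by (metis add_mset_commute)
  have e2: "{#3,3,2#} = {#2::nat,3,3#}" by (metis add_mset_commute)
  have F1: "col \<in> {chat {#1,1,1#}, chat {#3,3,1#}, chat {#2,3,1#}}" if "col \<in> colours3" for col
    using construction[OF H c3(1) c3(2) c3(3) c3(1) cov1 that] by auto
  have F2: "col \<in> {chat {#2,2,2#}, chat {#2,3,3#}, chat {#2,3,1#}}" if "col \<in> colours3" for col
    using construction[OF H c3(2) c3(1) c3(3) c3(2) cov2 that] unfolding e1 e2 by auto
  have F3: "col \<in> {chat {#1,1,1#}, chat {#3,3,1#}, chat {#2,3,3#}}" if "col \<in> colours3" for col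
    using construction[OF H c3(1) c3(2) c3(3) c3(3) cov3 that] unfolding e2 by auto
  show False
    by (rule fin[OF F1[OF c3(1)] F1[OF c3(2)] F1[OF c3(3)]
      F3[OF c3(1)] F3[OF c3(2)] F3[OF c3(3)] F2[OF c3(1)] F2[OF c3(2)] F2[OF c3(3)]])
  qed
qed

end
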